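(* Let $P_0=(|P_0|,\preccurlyeq_0)$ be a finite poset with $|P_0|=\{x_1,\dots,x_{m_0}\}$, and let $S\subseteq|P_0|$ be a chain. Fix nonnegative integer values of $m_i$ for all $i$ with $x_i\notin S$, and let $f$ be the polynomial with rational coefficients in the variables $(m_i)_{x_i\in S}$ such that $L_+(P_0;m_1,\dots,m_{m_0})=f((m_i)_{x_i\in S})$ for all nonnegative integer values of these variables. Then the total degree of $f$ equals $\sum m_i$, summed over those $i$ such that $x_i$ is $\preccurlyeq_0$-incomparable with at least one element of $S$.
   Context: For nonnegative integers $m_1,\dots,m_{m_0}$ let $C_1,\dots,C_{m_0}$ be pairwise disjoint chains, $C_i$ being $x_{i,1}<\dots<x_{i,m_i}$. The lexicographic sum $P=P_0*(C_1,\dots,C_{m_0})$ is the poset on $\bigcup_i|C_i|$ with $x_{i,j}\preccurlyeq x_{i',j'}$ iff either $i\ne i'$ and $x_i\preccurlyeq_0x_{i'}$, or $i=i'$ and $j\le j'$. $L_+(P_0;m_1,\dots,m_{m_0})$ is the number of linearizations (total orders refining $\preccurlyeq$) of $P$. When $S$ is a chain, such a polynomial $f$ exists and is unique. The total degree of a multivariable polynomial is the maximum over its monomials of the sum of the exponents. *)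

theory Defs
  imports Complex_Main "HOL-Library.Poly_Mapping"
begin

text \<open>Poset P0 on the index set {..<m0} (0-based indices: index i stands for x_(i+1)),
  given as a relation r0 (a partial order on {..<m0}).\<close>

definition lexsum_carrier :: "nat \<Rightarrow> (nat \<Rightarrow> nat) \<Rightarrow> (nat \<times> nat) set" where
  "lexsum_carrier m0 m = {(i, j). i < m0 \<and> j < m i}"

definition lexsum_rel :: "(nat \<times> nat) set \<Rightarrow> nat \<Rightarrow> (nat \<Rightarrow> nat) \<Rightarrow> ((nat \<times> nat) \<times> (nat \<times> nat)) set" where
  "lexsum_rel r0 m0 m = {((i, j), (i', j')).
     (i, j) \<in> lexsum_carrier m0 m \<and> (i', j') \<in> lexsum_carrier m0 m \<and>
     ((i \<noteq> i' \<and> (i, i') \<in> r0) \<or> (i = i' \<and> j \<le> j'))}"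

definition L_plus :: "(nat \<times> nat) set \<Rightarrow> nat \<Rightarrow> (nat \<Rightarrow> nat) \<Rightarrow> nat" where
  "L_plus r0 m0 m = card {T. linear_order_on (lexsum_carrier m0 m) T \<and> lexsum_rel r0 m0 m \<subseteq> T}"

definition mpoly_eval :: "((nat \<Rightarrow>\<^sub>0 nat) \<Rightarrow>\<^sub>0 rat) \<Rightarrow> (nat \<Rightarrow> rat) \<Rightarrow> rat" where
  "mpoly_eval p v = (\<Sum>a\<in>Poly_Mapping.keys p. Poly_Mapping.lookup p a * (\<Prod>i\<in>Poly_Mapping.keys a. v i ^ Poly_Mapping.lookup a i))"

definition total_degree :: "((nat \<Rightarrow>\<^sub>0 nat) \<Rightarrow>\<^sub>0 rat) \<Rightarrow> nat" where
  "total_degree p = Max (insert 0 ((\<lambda>a. \<Sum>i\<in>Poly_Mapping.keys a. Poly_Mapping.lookup a i) ` Poly_Mapping.keys p))"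

end

theory Submission
  imports Defs "HOL-Library.FuncSet"
begin

definition mdeg :: "(nat \<Rightarrow>\<^sub>0 nat) \<Rightarrow> nat" where
  "mdeg a = (\<Sum>i\<in>Poly_Mapping.keys a. Poly_Mapping.lookup a i)"

lemma total_degree_ge: "a \<in> Poly_Mapping.keys f \<Longrightarrow> mdeg a \<le> total_degree f"
  unfolding total_degree_def mdeg_def by (intro Max_ge) auto

lemma total_degree_cases:
  "total_degree f = 0 \<or> (\<exists>a\<in>Poly_Mapping.keys f. mdeg a = total_degree f)"
proof -
  have fin: "finite (insert 0 ((\<lambda>a. \<Sum>i\<in>Poly_Mapping.keys a. Poly_Mapping.lookup a i) ` Poly_Mapping.keys f))"
    by auto
  have "total_degree f \<in> insert 0 ((\<lambda>a. \<Sum>i\<in>Poly_Mapping.keys a. Poly_Mapping.lookup a i) ` Poly_Mapping.keys f)"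
    unfolding total_degree_def using Max_in[OF fin] by blast
  then show ?thesis unfolding mdeg_def by auto
qed

lemma mono_bound:
  fixes v :: "nat \<Rightarrow> nat"
  assumes "finite S" "Poly_Mapping.keys a \<subseteq> S"
  shows "(\<Prod>i\<in>Poly_Mapping.keys a. (of_nat (v i) :: rat) ^ Poly_Mapping.lookup a i)
         \<le> (1 + of_nat (\<Sum>s\<in>S. v s)) ^ mdeg a"
proof -
  have "(\<Prod>i\<in>Poly_Mapping.keys a. (of_nat (v i) :: rat) ^ Poly_Mapping.lookup a i)
       \<le> (\<Prod>i\<in>Poly_Mapping.keys a. (1 + of_nat (\<Sum>s\<in>S. v s)) ^ Poly_Mapping.lookup a i)"
  proof (rule prod_mono, safe)
    fix i assume i: "i \<in> Poly_Mapping.keys a"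
    have "v i \<le> (\<Sum>s\<in>S. v s)" using assms i by (intro member_le_sum) auto
    hence "(of_nat (v i) :: rat) \<le> 1 + of_nat (\<Sum>s\<in>S. v s)" by linarith
    thus "(of_nat (v i) :: rat) ^ Poly_Mapping.lookup a i \<le> (1 + of_nat (\<Sum>s\<in>S. v s)) ^ Poly_Mapping.lookup a i"
      by (intro power_mono) auto
  qed auto
  also have "\<dots> = (1 + of_nat (\<Sum>s\<in>S. v s)) ^ mdeg a"
    unfolding mdeg_def by (simp add: power_sum)
  finally show ?thesis .
qed

lemma eval_bound:
  fixes v :: "nat \<Rightarrow> nat"
  assumes "finite S" "\<forall>a\<in>Poly_Mapping.keys f. Poly_Mapping.keys a \<subseteq> S"
  shows "\<bar>mpoly_eval f (\<lambda>i. of_nat (v i))\<bar> \<le>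
     (\<Sum>a\<in>Poly_Mapping.keys f. \<bar>Poly_Mapping.lookup f a\<bar>) * (1 + of_nat (\<Sum>s\<in>S. v s)) ^ total_degree f"
proof -
  let ?V = "(1 + of_nat (\<Sum>s\<in>S. v s)) :: rat"
  have "\<bar>mpoly_eval f (\<lambda>i. of_nat (v i))\<bar> \<le> (\<Sum>a\<in>Poly_Mapping.keys f. \<bar>Poly_Mapping.lookup f a *
      (\<Prod>i\<in>Poly_Mapping.keys a. (of_nat (v i) :: rat) ^ Poly_Mapping.lookup a i)\<bar>)"
    unfolding mpoly_eval_def by (rule sum_abs)
  also have "\<dots> \<le> (\<Sum>a\<in>Poly_Mapping.keys f. \<bar>Poly_Mapping.lookup f a\<bar> * ?V ^ total_degree f)"
  proof (rule sum_mono)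
    fix a assume a: "a \<in> Poly_Mapping.keys f"
    have p0: "0 \<le> (\<Prod>i\<in>Poly_Mapping.keys a. (of_nat (v i) :: rat) ^ Poly_Mapping.lookup a i)"
      by (intro prod_nonneg) auto
    have "(\<Prod>i\<in>Poly_Mapping.keys a. (of_nat (v i) :: rat) ^ Poly_Mapping.lookup a i) \<le> ?V ^ mdeg a"
      using mono_bound[OF assms(1)] assms(2) a by blast
    also have "\<dots> \<le> ?V ^ total_degree f"
      by (rule power_increasing) (auto simp: total_degree_ge[OF a] sum_nonneg)
    finally have "\<bar>(\<Prod>i\<in>Poly_Mapping.keys a. (of_nat (v i) :: rat) ^ Poly_Mapping.lookup a i)\<bar> \<le> ?V ^ total_degree f"
      using p0 by simp
    thus "\<bar>Poly_Mapping.lookup f a * (\<Prod>i\<in>Poly_Mapping.keys a. (of_nat (v i) :: rat) ^ Poly_Mapping.lookup a i)\<bar>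
        \<le> \<bar>Poly_Mapping.lookup f a\<bar> * ?V ^ total_degree f"
      by (simp add: abs_mult mult_left_mono)
  qed
  also have "\<dots> = (\<Sum>a\<in>Poly_Mapping.keys f. \<bar>Poly_Mapping.lookup f a\<bar>) * ?V ^ total_degree f"
    by (simp add: sum_distrib_right)
  finally show ?thesis .
qed

lemma pow_growth:
  fixes C :: rat
  assumes "\<forall>u::nat. u \<ge> 1 \<longrightarrow> of_nat u ^ D \<le> C * of_nat u ^ d"
  shows "D \<le> d"
proof (rule ccontr)
  assume "\<not> D \<le> d"
  hence Dd: "D \<ge> Suc d" by simp
  obtain n :: nat where n: "C < of_nat n" using reals_Archimedean2 by blast
  define u where "u = Suc n"
  have u: "of_nat u > C" "u \<ge> 1" using n unfolding u_def by auto
  have "(of_nat u :: rat) ^ Suc d \<le> of_nat u ^ D"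
    using u Dd by (intro power_increasing) auto
  also have "\<dots> \<le> C * of_nat u ^ d" using assms u by auto
  finally have "of_nat u * of_nat u ^ d \<le> C * (of_nat u :: rat) ^ d" by simp
  moreover have "(of_nat u :: rat) ^ d > 0" using u by simp
  ultimately have "of_nat u \<le> C" by simp
  thus False using u by simp
qed

lemma degree_lower:
  assumes "finite S" "\<forall>a\<in>Poly_Mapping.keys f. Poly_Mapping.keys a \<subseteq> S"
    and "\<forall>u::nat. of_nat (u ^ D) \<le> mpoly_eval f (\<lambda>i. of_nat (cc * u))"
  shows "D \<le> total_degree f"
proof -
  let ?A = "(\<Sum>a\<in>Poly_Mapping.keys f. \<bar>Poly_Mapping.lookup f a\<bar>)"
  let ?k = "card S"
  show ?thesis
  proof (rule pow_growth[where C = "?A * (1 + of_nat (?k * cc)) ^ total_degree f"], intro allI impI)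
    fix u :: nat assume u: "u \<ge> 1"
    have "(of_nat u :: rat) ^ D = of_nat (u ^ D)" by simp
    also have "\<dots> \<le> mpoly_eval f (\<lambda>i. of_nat (cc * u))" using assms(3) by blast
    also have "\<dots> \<le> \<bar>mpoly_eval f (\<lambda>i. of_nat (cc * u))\<bar>" by simp
    also have "\<dots> \<le> ?A * (1 + of_nat (\<Sum>s\<in>S. cc * u)) ^ total_degree f"
      by (rule eval_bound[OF assms(1,2)])
    also have "\<dots> \<le> ?A * ((1 + of_nat (?k * cc)) * of_nat u) ^ total_degree f"
    proof (intro mult_left_mono power_mono)
      have "(1 + of_nat (\<Sum>s\<in>S. cc * u) :: rat) = 1 + of_nat (?k * cc) * of_nat u" by simp
      also have "\<dots> \<le> (1 + of_nat (?k * cc)) * of_nat u" using u by (simp add: algebra_simps)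
      finally show "(1 + of_nat (\<Sum>s\<in>S. cc * u) :: rat) \<le> (1 + of_nat (?k * cc)) * of_nat u" .
    qed (auto simp: sum_nonneg)
    also have "\<dots> = ?A * (1 + of_nat (?k * cc)) ^ total_degree f * of_nat u ^ total_degree f"
      by (simp add: power_mult_distrib)
    finally show "(of_nat u :: rat) ^ D \<le> ?A * (1 + of_nat (?k * cc)) ^ total_degree f * of_nat u ^ total_degree f" .
  qed
qed

lemma digits_lt:
  fixes a :: "nat \<Rightarrow> nat"
  shows "(\<forall>i<n. a i < B) \<Longrightarrow> (\<Sum>i<n. a i * B ^ i) < B ^ n"
proof (induction n)
  case 0 then show ?case by simp
next
  case (Suc n)
  have "(\<Sum>i<Suc n. a i * B ^ i) = (\<Sum>i<n. a i * B ^ i) + a n * B ^ n" by simp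
  also have "\<dots> < B ^ n + a n * B ^ n" using Suc by auto
  also have "\<dots> = (Suc (a n)) * B ^ n" by simp
  also have "\<dots> \<le> B * B ^ n" using Suc.prems by (intro mult_right_mono) auto
  finally show ?case by simp
qed

lemma dm: "(x::nat) < c \<Longrightarrow> (x + y * c) div c = y" "(x::nat) < c \<Longrightarrow> (x + y * c) mod c = x"
  by auto

lemma digits_inj:
  fixes a b :: "nat \<Rightarrow> nat"
  shows "(\<forall>i<n. a i < B) \<Longrightarrow> (\<forall>i<n. b i < B) \<Longrightarrow>
    (\<Sum>i<n. a i * B ^ i) = (\<Sum>i<n. b i * B ^ i) \<Longrightarrow> \<forall>i<n. a i = b i"
proof (induction n)
  case 0 then show ?case by simp
next
  case (Suc n)
  have la: "(\<Sum>i<n. a i * B ^ i) < B ^ n" using Suc.prems by (intro digits_lt) auto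
  have lb: "(\<Sum>i<n. b i * B ^ i) < B ^ n" using Suc.prems by (intro digits_lt) auto
  have eq: "(\<Sum>i<n. a i * B ^ i) + a n * B ^ n = (\<Sum>i<n. b i * B ^ i) + b n * B ^ n"
    using Suc.prems(3) by simp
  have "a n = ((\<Sum>i<n. a i * B ^ i) + a n * B ^ n) div B ^ n" by (rule dm(1)[OF la, symmetric])
  also have "\<dots> = ((\<Sum>i<n. b i * B ^ i) + b n * B ^ n) div B ^ n" by (simp only: eq)
  also have "\<dots> = b n" by (rule dm(1)[OF lb])
  finally have abn: "a n = b n" .
  have "(\<Sum>i<n. a i * B ^ i) = ((\<Sum>i<n. a i * B ^ i) + a n * B ^ n) mod B ^ n" by (rule dm(2)[OF la, symmetric])
  also have "\<dots> = ((\<Sum>i<n. b i * B ^ i) + b n * B ^ n) mod B ^ n" by (simp only: eq)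
  also have "\<dots> = (\<Sum>i<n. b i * B ^ i)" by (rule dm(2)[OF lb])
  finally have sab: "(\<Sum>i<n. a i * B ^ i) = (\<Sum>i<n. b i * B ^ i)" .
  have pa: "\<forall>i<n. a i < B" using Suc.prems(1) by simp
  have pb: "\<forall>i<n. b i < B" using Suc.prems(2) by simp
  have "\<forall>i<n. a i = b i" by (rule Suc.IH[OF pa pb sab])
  with abn have "\<forall>i<Suc n. a i = b i" by (auto simp: less_Suc_eq)
  then show ?case .
qed

lemma degree_upper:
  fixes f :: "(nat \<Rightarrow>\<^sub>0 nat) \<Rightarrow>\<^sub>0 rat" and K :: rat
  assumes Sn: "S \<subseteq> {..<n}" and keysS: "\<forall>a\<in>Poly_Mapping.keys f. Poly_Mapping.keys a \<subseteq> S"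
    and K0: "0 \<le> K"
    and nonneg: "\<forall>v::nat\<Rightarrow>nat. 0 \<le> mpoly_eval f (\<lambda>i. of_nat (v i))"
    and bound: "\<forall>v::nat\<Rightarrow>nat. mpoly_eval f (\<lambda>i. of_nat (v i)) \<le> K * (1 + of_nat (\<Sum>s\<in>S. v s)) ^ D"
  shows "total_degree f \<le> D"
proof (rule ccontr)
  assume "\<not> total_degree f \<le> D"
  hence dD: "total_degree f \<ge> Suc D" by simp
  define d where "d = total_degree f"
  obtain a0 where a0: "a0 \<in> Poly_Mapping.keys f" "mdeg a0 = d"
    using total_degree_cases[of f] dD d_def by auto
  have finS: "finite S" using Sn finite_subset by blast
  define B where "B = Suc (\<Sum>a\<in>Poly_Mapping.keys f. mdeg a)"
  have Bpos: "B \<ge> 1" unfolding B_def by simp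
  have aB: "Poly_Mapping.lookup a i < B" if a: "a \<in> Poly_Mapping.keys f" for a i
  proof -
    have "Poly_Mapping.lookup a i \<le> mdeg a"
    proof (cases "i \<in> Poly_Mapping.keys a")
      case True thus ?thesis unfolding mdeg_def by (intro member_le_sum) auto
    next
      case False thus ?thesis by (simp add: not_in_keys_iff_lookup_eq_zero)
    qed
    also have "mdeg a \<le> (\<Sum>a\<in>Poly_Mapping.keys f. mdeg a)" using a by (intro member_le_sum) auto
    finally show ?thesis unfolding B_def by simp
  qed
  define M where "M = (D + 1) * B ^ n"
  have BnM: "B ^ n \<le> M" unfolding M_def by simp
  define w where "w i = M + B ^ i" for i
  define wt where "wt a = (\<Sum>i\<in>Poly_Mapping.keys a. Poly_Mapping.lookup a i * w i)" for a
  define R where "R a = (\<Sum>i<n. Poly_Mapping.lookup a i * B ^ i)" for a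
  have wt_eq: "wt a = M * mdeg a + R a" if a: "a \<in> Poly_Mapping.keys f" for a
  proof -
    have ksub: "Poly_Mapping.keys a \<subseteq> {..<n}" using a keysS Sn by blast
    have "wt a = (\<Sum>i\<in>Poly_Mapping.keys a. M * Poly_Mapping.lookup a i + Poly_Mapping.lookup a i * B ^ i)"
      unfolding wt_def w_def by (simp add: algebra_simps)
    also have "\<dots> = M * mdeg a + (\<Sum>i\<in>Poly_Mapping.keys a. Poly_Mapping.lookup a i * B ^ i)"
      unfolding mdeg_def by (simp add: sum.distrib sum_distrib_left)
    also have "(\<Sum>i\<in>Poly_Mapping.keys a. Poly_Mapping.lookup a i * B ^ i) = R a"
      unfolding R_def using ksub
      by (intro sum.mono_neutral_left) (auto simp: not_in_keys_iff_lookup_eq_zero)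
    finally show ?thesis .
  qed
  have R_lt: "R a < M" if a: "a \<in> Poly_Mapping.keys f" for a
  proof -
    have "R a < B ^ n" unfolding R_def using aB[OF a] by (intro digits_lt) auto
    thus ?thesis using BnM by simp
  qed
  have wt_inj: "a = b" if a: "a \<in> Poly_Mapping.keys f" and b: "b \<in> Poly_Mapping.keys f"
    and e: "wt a = wt b" for a b
  proof -
    have e2: "M * mdeg a + R a = M * mdeg b + R b" using e wt_eq a b by simp
    have "(M * mdeg a + R a) div M = mdeg a" "(M * mdeg a + R a) mod M = R a"
      using R_lt[OF a] by auto
    moreover have "(M * mdeg b + R b) div M = mdeg b" "(M * mdeg b + R b) mod M = R b"
      using R_lt[OF b] by auto
    ultimately have "R a = R b" using e2 by metis
    hence "\<forall>i<n. Poly_Mapping.lookup a i = Poly_Mapping.lookup b i"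
      unfolding R_def using aB a b by (intro digits_inj[of n _ B]) auto
    moreover have "Poly_Mapping.lookup a i = 0" "Poly_Mapping.lookup b i = 0" if "i \<ge> n" for i
      using that a b keysS Sn by (metis lessThan_iff not_in_keys_iff_lookup_eq_zero not_le subsetD)+
    ultimately show "a = b"
      by (intro poly_mapping_eqI) (metis not_less)
  qed
  define W where "W = Max (wt ` Poly_Mapping.keys f)"
  have finK: "finite (Poly_Mapping.keys f)" by simp
  have "W \<in> wt ` Poly_Mapping.keys f" unfolding W_def using a0 by (intro Max_in) auto
  then obtain as where as: "as \<in> Poly_Mapping.keys f" "wt as = W" by auto
  have Wge: "wt a \<le> W" if "a \<in> Poly_Mapping.keys f" for a
    unfolding W_def using that by (intro Max_ge) auto
  have Wlt: "wt a \<le> W - 1" if "a \<in> Poly_Mapping.keys f" "a \<noteq> as" for a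
  proof -
    have "wt a \<noteq> W" using wt_inj[OF that(1) as(1)] that as by auto
    thus ?thesis using Wge[OF that(1)] by simp
  qed
  have WMd: "M * d \<le> W" using Wge[OF a0(1)] wt_eq[OF a0(1)] a0 by simp
  have Mpos: "M > 0" unfolding M_def using Bpos by simp
  have Edef: "(M + B ^ n) * D < M * d"
  proof -
    have "(M + B ^ n) * D = B ^ n * (D * (D + 2))" unfolding M_def by (simp add: algebra_simps)
    also have "\<dots> < B ^ n * ((D + 1) * (D + 1))"
      using Bpos by (intro mult_strict_left_mono) (auto simp: algebra_simps)
    also have "\<dots> = M * (D + 1)" unfolding M_def by (simp add: algebra_simps)
    also have "\<dots> \<le> M * d" using dD d_def by (intro mult_left_mono) auto
    finally show ?thesis .
  qed
  hence EW: "(M + B ^ n) * D \<le> W - 1" using WMd by simp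
  have "M * d > 0" using Mpos dD d_def by simp
  hence W1: "W \<ge> 1" using WMd by linarith
  define cs where "cs = Poly_Mapping.lookup f as"
  have cs0: "cs \<noteq> 0" unfolding cs_def using as by (simp add: lookup_not_eq_zero_eq_in_keys)
  define A where "A = (\<Sum>a\<in>Poly_Mapping.keys f - {as}. \<bar>Poly_Mapping.lookup f a\<bar>)"
  define k where "k = card S"
  define K' where "K' = K * (1 + of_nat k) ^ D"
  have main: "\<bar>cs\<bar> * of_nat t ^ W \<le> (K' + A) * of_nat t ^ (W - 1)" if t: "t \<ge> 1" for t :: nat
  proof -
    define v where "v i = t ^ w i" for i
    have mono: "(\<Prod>i\<in>Poly_Mapping.keys a. (of_nat (v i) :: rat) ^ Poly_Mapping.lookup a i) = of_nat t ^ wt a" for a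
      unfolding v_def wt_def by (simp add: power_sum power_mult[symmetric] mult.commute)
    define g where "g = mpoly_eval f (\<lambda>i. of_nat (v i))"
    define rest where "rest = (\<Sum>a\<in>Poly_Mapping.keys f - {as}. Poly_Mapping.lookup f a * of_nat t ^ wt a)"
    have g_split: "g = cs * of_nat t ^ W + rest"
      unfolding g_def mpoly_eval_def mono rest_def cs_def
      using as by (simp add: sum.remove[OF finK as(1)])
    have rest_bd: "\<bar>rest\<bar> \<le> A * of_nat t ^ (W - 1)"
    proof -
      have "\<bar>rest\<bar> \<le> (\<Sum>a\<in>Poly_Mapping.keys f - {as}. \<bar>Poly_Mapping.lookup f a * of_nat t ^ wt a\<bar>)"
        unfolding rest_def by (rule sum_abs)
      also have "\<dots> \<le> (\<Sum>a\<in>Poly_Mapping.keys f - {as}. \<bar>Poly_Mapping.lookup f a\<bar> * of_nat t ^ (W - 1))"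
      proof (rule sum_mono)
        fix a assume a: "a \<in> Poly_Mapping.keys f - {as}"
        have "(of_nat t :: rat) ^ wt a \<le> of_nat t ^ (W - 1)"
          using t Wlt a by (intro power_increasing) auto
        thus "\<bar>Poly_Mapping.lookup f a * of_nat t ^ wt a\<bar> \<le> \<bar>Poly_Mapping.lookup f a\<bar> * of_nat t ^ (W - 1)"
          by (simp add: abs_mult mult_left_mono)
      qed
      also have "\<dots> = A * of_nat t ^ (W - 1)" unfolding A_def by (simp add: sum_distrib_right)
      finally show ?thesis .
    qed
    have sumS: "(\<Sum>s\<in>S. v s) \<le> k * t ^ (M + B ^ n)"
    proof -
      have "(\<Sum>s\<in>S. v s) \<le> (\<Sum>s\<in>S. t ^ (M + B ^ n))"
      proof (rule sum_mono)
        fix s assume s: "s \<in> S"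
        have "B ^ s \<le> B ^ n" using s Sn Bpos by (intro power_increasing) auto
        hence "w s \<le> M + B ^ n" unfolding w_def by simp
        thus "v s \<le> t ^ (M + B ^ n)" unfolding v_def using t by (intro power_increasing) auto
      qed
      thus ?thesis unfolding k_def by simp
    qed
    have "g \<le> K * (1 + of_nat (\<Sum>s\<in>S. v s)) ^ D" unfolding g_def using bound by blast
    also have "\<dots> \<le> K * ((1 + of_nat k) * of_nat t ^ (M + B ^ n)) ^ D"
    proof (intro mult_left_mono power_mono K0)
      have "(1 + of_nat (\<Sum>s\<in>S. v s) :: rat) \<le> 1 + of_nat k * of_nat t ^ (M + B ^ n)"
      proof -
        have "(of_nat (\<Sum>s\<in>S. v s) :: rat) \<le> of_nat (k * t ^ (M + B ^ n))"
          using sumS by (simp only: of_nat_le_iff)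
        thus ?thesis by simp
      qed
      also have "\<dots> \<le> (1 + of_nat k) * of_nat t ^ (M + B ^ n)"
      proof -
        have "(1::rat) \<le> of_nat t ^ (M + B ^ n)" using t by (simp add: one_le_power)
        thus ?thesis by (simp add: algebra_simps)
      qed
      finally show "(1 + of_nat (\<Sum>s\<in>S. v s) :: rat) \<le> (1 + of_nat k) * of_nat t ^ (M + B ^ n)" .
    qed (simp add: sum_nonneg)
    also have "\<dots> = K' * of_nat t ^ ((M + B ^ n) * D)"
      unfolding K'_def by (simp add: power_mult_distrib power_mult)
    also have "\<dots> \<le> K' * of_nat t ^ (W - 1)"
      using t EW unfolding K'_def by (intro mult_left_mono power_increasing K0) (auto simp: K0)
    finally have g_bd: "g \<le> K' * of_nat t ^ (W - 1)" .
    have g0: "0 \<le> g" unfolding g_def using nonneg by blast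
    have "\<bar>cs\<bar> * of_nat t ^ W = \<bar>g - rest\<bar>" using g_split by (simp add: abs_mult)
    also have "\<dots> \<le> \<bar>g\<bar> + \<bar>rest\<bar>" by (rule abs_triangle_ineq4)
    also have "\<dots> \<le> K' * of_nat t ^ (W - 1) + A * of_nat t ^ (W - 1)" using g_bd g0 rest_bd by simp
    finally show ?thesis by (simp add: algebra_simps)
  qed
  have csp: "\<bar>cs\<bar> > 0" using cs0 by simp
  obtain n0 :: nat where n0: "(K' + A) / \<bar>cs\<bar> < of_nat n0" using reals_Archimedean2 by blast
  define t where "t = Suc n0"
  have t1: "t \<ge> 1" unfolding t_def by simp
  have tbig: "(K' + A) < \<bar>cs\<bar> * of_nat t"
  proof -
    have "K' + A < \<bar>cs\<bar> * of_nat n0" using n0 csp by (simp add: divide_less_eq mult.commute)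
    also have "\<dots> \<le> \<bar>cs\<bar> * of_nat t" unfolding t_def using csp by (intro mult_left_mono) auto
    finally show ?thesis .
  qed
  have tp: "(of_nat t :: rat) ^ (W - 1) > 0" using t1 by simp
  have WS: "W = Suc (W - 1)" using W1 by simp
  have "(of_nat t :: rat) ^ W = of_nat t ^ Suc (W - 1)" using WS by (rule arg_cong)
  also have "\<dots> = of_nat t * of_nat t ^ (W - 1)" by (rule power_Suc)
  finally have pw: "(of_nat t :: rat) ^ W = of_nat t * of_nat t ^ (W - 1)" .
  have "(\<bar>cs\<bar> * of_nat t) * of_nat t ^ (W - 1) = \<bar>cs\<bar> * of_nat t ^ W"
    unfolding pw by (simp only: mult.assoc)
  also have "\<dots> \<le> (K' + A) * of_nat t ^ (W - 1)" by (rule main[OF t1])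
  finally have "(\<bar>cs\<bar> * of_nat t) * of_nat t ^ (W - 1) \<le> (K' + A) * of_nat t ^ (W - 1)" .
  hence "\<bar>cs\<bar> * of_nat t \<le> K' + A" using tp by (rule mult_right_le_imp_le)
  thus False using tbig by simp
qed

locale lsetup =
  fixes r0 :: "(nat \<times> nat) set" and m0 :: nat and S :: "nat set" and mfix :: "nat \<Rightarrow> nat"
  assumes poset: "partial_order_on {..<m0} r0"
    and S_sub: "S \<subseteq> {..<m0}"
    and S_chain: "\<forall>a\<in>S. \<forall>b\<in>S. (a, b) \<in> r0 \<or> (b, a) \<in> r0"
begin

definition mm :: "(nat \<Rightarrow> nat) \<Rightarrow> nat \<Rightarrow> nat" where
  "mm v = (\<lambda>i. if i \<in> S then v i else mfix i)"

definition II :: "nat set" where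
  "II = {i. i < m0 \<and> (\<exists>s\<in>S. (i, s) \<notin> r0 \<and> (s, i) \<notin> r0)}"

definition FF :: "(nat \<times> nat) set" where
  "FF = {(i, j). i < m0 \<and> i \<notin> S \<and> j < mfix i}"

definition FI :: "(nat \<times> nat) set" where
  "FI = {(i, j). i \<in> II \<and> j < mfix i}"

definition SC :: "(nat \<Rightarrow> nat) \<Rightarrow> (nat \<times> nat) set" where
  "SC v = {(i, j). i \<in> S \<and> j < v i}"

definition Ext :: "(nat \<Rightarrow> nat) \<Rightarrow> (nat \<times> nat) rel set" where
  "Ext v = {T. linear_order_on (lexsum_carrier m0 (mm v)) T \<and> lexsum_rel r0 m0 (mm v) \<subseteq> T}"

lemma L_plus_Ext: "L_plus r0 m0 (mm v) = card (Ext v)"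
  unfolding L_plus_def Ext_def by simp

lemma r0_sub: "r0 \<subseteq> {..<m0} \<times> {..<m0}"
  using poset unfolding partial_order_on_def preorder_on_def by blast
lemma r0_refl: "i < m0 \<Longrightarrow> (i, i) \<in> r0"
  using poset unfolding partial_order_on_def preorder_on_def refl_on_def by blast
lemma r0_trans: "(a, b) \<in> r0 \<Longrightarrow> (b, c) \<in> r0 \<Longrightarrow> (a, c) \<in> r0"
  using poset unfolding partial_order_on_def preorder_on_def trans_def by blast
lemma r0_antisym: "(a, b) \<in> r0 \<Longrightarrow> (b, a) \<in> r0 \<Longrightarrow> a = b"
  using poset unfolding partial_order_on_def antisym_def by blast

lemma finS: "finite S" using S_sub finite_subset by blast

lemma II_notS: "i \<in> II \<Longrightarrow> i \<notin> S"
  unfolding II_def using S_chain by blast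

lemma carrier_eq: "lexsum_carrier m0 (mm v) = FF \<union> SC v"
  unfolding lexsum_carrier_def FF_def SC_def mm_def using S_sub by (auto split: if_splits)

lemma FF_SC_disj: "FF \<inter> SC v = {}"
  unfolding FF_def SC_def by auto

lemma FI_sub: "FI \<subseteq> FF"
  unfolding FI_def FF_def II_def using S_chain by auto

lemma finFF: "finite FF"
proof -
  have "FF \<subseteq> {..<m0} \<times> {..<Suc (\<Sum>i<m0. mfix i)}"
  proof
    fix p assume "p \<in> FF"
    then obtain i j where p: "p = (i, j)" "i < m0" "j < mfix i" unfolding FF_def by auto
    have "mfix i \<le> (\<Sum>i<m0. mfix i)" using p by (intro member_le_sum) auto
    thus "p \<in> {..<m0} \<times> {..<Suc (\<Sum>i<m0. mfix i)}" using p by auto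
  qed
  thus ?thesis by (rule finite_subset) auto
qed

lemma finSC: "finite (SC v)"
proof -
  have "SC v = Sigma S (\<lambda>s. {..<v s})" unfolding SC_def by auto
  thus ?thesis using finS by auto
qed

lemma card_SC: "card (SC v) = (\<Sum>s\<in>S. v s)"
proof -
  have "SC v = Sigma S (\<lambda>s. {..<v s})" unfolding SC_def by auto
  thus ?thesis using finS by (simp add: card_SigmaI)
qed

lemma card_FI: "card FI = (\<Sum>i\<in>II. mfix i)"
proof -
  have "FI = Sigma II (\<lambda>i. {..<mfix i})" unfolding FI_def by auto
  moreover have "finite II" unfolding II_def by auto
  ultimately show ?thesis by (simp add: card_SigmaI)
qed

lemma finC: "finite (lexsum_carrier m0 (mm v))"
  using carrier_eq finFF finSC by simp

lemma rel_sub: "lexsum_rel r0 m0 (mm v) \<subseteq> lexsum_carrier m0 (mm v) \<times> lexsum_carrier m0 (mm v)"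
  unfolding lexsum_rel_def by auto

lemma rel_antisym: "(p, q) \<in> lexsum_rel r0 m0 (mm v) \<Longrightarrow> (q, p) \<in> lexsum_rel r0 m0 (mm v) \<Longrightarrow> p = q"
  unfolding lexsum_rel_def using r0_antisym by auto

lemma Ext_facts:
  assumes "T \<in> Ext v"
  shows "T \<subseteq> lexsum_carrier m0 (mm v) \<times> lexsum_carrier m0 (mm v)"
    and "\<And>p. p \<in> lexsum_carrier m0 (mm v) \<Longrightarrow> (p, p) \<in> T"
    and "\<And>p q r. (p, q) \<in> T \<Longrightarrow> (q, r) \<in> T \<Longrightarrow> (p, r) \<in> T"
    and "\<And>p q. (p, q) \<in> T \<Longrightarrow> (q, p) \<in> T \<Longrightarrow> p = q"
    and "\<And>p q. p \<in> lexsum_carrier m0 (mm v) \<Longrightarrow> q \<in> lexsum_carrier m0 (mm v) \<Longrightarrow> p \<noteq> q \<Longrightarrow> (p, q) \<in> T \<or> (q, p) \<in> T"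
    and "lexsum_rel r0 m0 (mm v) \<subseteq> T"
  using assms unfolding Ext_def linear_order_on_def partial_order_on_def preorder_on_def refl_on_def
    trans_def antisym_def total_on_def by blast+

lemma Ext_cmp:
  assumes T: "T \<in> Ext v" and pq: "(p, q) \<in> lexsum_rel r0 m0 (mm v) \<or> (q, p) \<in> lexsum_rel r0 m0 (mm v)"
  shows "(p, q) \<in> T \<longleftrightarrow> (p, q) \<in> lexsum_rel r0 m0 (mm v)"
proof
  assume pT: "(p, q) \<in> T"
  show "(p, q) \<in> lexsum_rel r0 m0 (mm v)"
  proof (rule ccontr)
    assume nr: "(p, q) \<notin> lexsum_rel r0 m0 (mm v)"
    hence "(q, p) \<in> lexsum_rel r0 m0 (mm v)" using pq by blast
    hence "(q, p) \<in> T" using Ext_facts(6)[OF T] by blast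
    hence "p = q" using Ext_facts(4)[OF T] pT by blast
    thus False using nr \<open>(q, p) \<in> lexsum_rel r0 m0 (mm v)\<close> by simp
  qed
next
  assume "(p, q) \<in> lexsum_rel r0 m0 (mm v)"
  thus "(p, q) \<in> T" using Ext_facts(6)[OF T] by blast
qed

end

context lsetup begin

lemma SC_sub_C: "SC v \<subseteq> lexsum_carrier m0 (mm v)" using carrier_eq by blast
lemma FF_sub_C: "FF \<subseteq> lexsum_carrier m0 (mm v)" using carrier_eq by blast

lemma SC_cmp:
  assumes "p \<in> SC v" "q \<in> SC v"
  shows "(p, q) \<in> lexsum_rel r0 m0 (mm v) \<or> (q, p) \<in> lexsum_rel r0 m0 (mm v)"
proof -
  obtain i j i' j' where pq: "p = (i, j)" "q = (i', j')" by (cases p, cases q) auto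
  have C: "p \<in> lexsum_carrier m0 (mm v)" "q \<in> lexsum_carrier m0 (mm v)" using assms SC_sub_C by auto
  have S: "i \<in> S" "i' \<in> S" using assms pq unfolding SC_def by auto
  show ?thesis
  proof (cases "i = i'")
    case True thus ?thesis using C pq unfolding lexsum_rel_def by auto
  next
    case False
    have "(i, i') \<in> r0 \<or> (i', i) \<in> r0" using S S_chain by blast
    thus ?thesis using C pq False unfolding lexsum_rel_def by auto
  qed
qed

lemma FS_incmp:
  assumes "p \<in> FF" "q \<in> SC v"
    and nc: "\<not> ((p, q) \<in> lexsum_rel r0 m0 (mm v) \<or> (q, p) \<in> lexsum_rel r0 m0 (mm v))"
  shows "p \<in> FI"
proof -
  obtain i j s j' where pq: "p = (i, j)" "q = (s, j')" by (cases p, cases q) auto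
  have C: "p \<in> lexsum_carrier m0 (mm v)" "q \<in> lexsum_carrier m0 (mm v)" using assms SC_sub_C FF_sub_C by auto
  have iss: "i \<notin> S" "s \<in> S" "i < m0" "j < mfix i" using assms pq unfolding SC_def FF_def by auto
  hence ne: "i \<noteq> s" by auto
  have "(i, s) \<notin> r0" "(s, i) \<notin> r0" using nc C pq ne unfolding lexsum_rel_def by auto
  hence "i \<in> II" unfolding II_def using iss by blast
  thus ?thesis unfolding FI_def using pq iss by auto
qed

definition DS :: "(nat \<Rightarrow> nat) \<Rightarrow> (nat \<times> nat) rel \<Rightarrow> nat \<times> nat \<Rightarrow> (nat \<times> nat) set" where
  "DS v T p = {q \<in> SC v. (q, p) \<in> T}"

lemma DS_nested:
  assumes T1: "T1 \<in> Ext v" and T2: "T2 \<in> Ext v"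
  shows "DS v T1 p \<subseteq> DS v T2 p \<or> DS v T2 p \<subseteq> DS v T1 p"
proof (rule ccontr)
  assume "\<not> ?thesis"
  then obtain x y where x: "x \<in> DS v T1 p" "x \<notin> DS v T2 p" and y: "y \<in> DS v T2 p" "y \<notin> DS v T1 p"
    by blast
  have xy: "x \<in> SC v" "y \<in> SC v" using x y unfolding DS_def by auto
  from SC_cmp[OF xy] show False
  proof
    assume "(x, y) \<in> lexsum_rel r0 m0 (mm v)"
    hence "(x, y) \<in> T2" using Ext_facts(6)[OF T2] by blast
    moreover have "(y, p) \<in> T2" using y unfolding DS_def by auto
    ultimately have "(x, p) \<in> T2" using Ext_facts(3)[OF T2] by blast
    thus False using x xy unfolding DS_def by auto
  next
    assume "(y, x) \<in> lexsum_rel r0 m0 (mm v)"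
    hence "(y, x) \<in> T1" using Ext_facts(6)[OF T1] by blast
    moreover have "(x, p) \<in> T1" using x unfolding DS_def by auto
    ultimately have "(y, p) \<in> T1" using Ext_facts(3)[OF T1] by blast
    thus False using y xy unfolding DS_def by auto
  qed
qed

lemma DS_eq:
  assumes T1: "T1 \<in> Ext v" and T2: "T2 \<in> Ext v" and c: "card (DS v T1 p) = card (DS v T2 p)"
  shows "DS v T1 p = DS v T2 p"
proof -
  have f: "finite (DS v T1 p)" "finite (DS v T2 p)" using finSC unfolding DS_def by auto
  from DS_nested[OF T1 T2] show ?thesis
    using card_subset_eq f c by metis
qed

definition phi :: "(nat \<Rightarrow> nat) \<Rightarrow> (nat \<times> nat) rel \<Rightarrow> (nat \<times> nat) rel \<times> (nat \<times> nat \<Rightarrow> nat)" where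
  "phi v T = (T \<inter> (FF \<times> FF), restrict (\<lambda>p. card (DS v T p)) FI)"

lemma phi_sub:
  assumes T1: "T1 \<in> Ext v" and T2: "T2 \<in> Ext v" and e: "phi v T1 = phi v T2"
  shows "T1 \<subseteq> T2"
proof
  fix x assume xT1: "x \<in> T1"
  obtain p q where x: "x = (p, q)" by (cases x) auto
  have pqT1: "(p, q) \<in> T1" using xT1 x by simp
  have C: "p \<in> lexsum_carrier m0 (mm v)" "q \<in> lexsum_carrier m0 (mm v)"
    using Ext_facts(1)[OF T1] pqT1 by auto
  have e1: "T1 \<inter> (FF \<times> FF) = T2 \<inter> (FF \<times> FF)" using e unfolding phi_def by simp
  have e2: "DS v T1 r = DS v T2 r" if "r \<in> FI" for r
  proof -
    have "restrict (\<lambda>p. card (DS v T1 p)) FI r = restrict (\<lambda>p. card (DS v T2 p)) FI r"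
      using e unfolding phi_def by simp
    hence "card (DS v T1 r) = card (DS v T2 r)" using that by simp
    thus ?thesis by (rule DS_eq[OF T1 T2])
  qed
  show "x \<in> T2"
  proof (cases "p = q")
    case True thus ?thesis using x C Ext_facts(2)[OF T2] by auto
  next
    case ne: False
    show ?thesis
    proof (cases "(p, q) \<in> lexsum_rel r0 m0 (mm v) \<or> (q, p) \<in> lexsum_rel r0 m0 (mm v)")
      case True
      thus ?thesis using Ext_cmp[OF T1 True] Ext_cmp[OF T2 True] pqT1 x by simp
    next
      case nc: False
      have pc: "p \<in> FF \<or> p \<in> SC v" "q \<in> FF \<or> q \<in> SC v" using C carrier_eq by auto
      show ?thesis
      proof (cases "p \<in> FF")
        case pF: True
        show ?thesis
        proof (cases "q \<in> FF")
          case True thus ?thesis using pF e1 pqT1 x by blast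
        next
          case False
          hence qS: "q \<in> SC v" using pc by auto
          have pFI: "p \<in> FI" using FS_incmp[OF pF qS] nc by blast
          have "(q, p) \<notin> T1" using Ext_facts(4)[OF T1] pqT1 ne by blast
          hence "q \<notin> DS v T1 p" unfolding DS_def by auto
          hence "q \<notin> DS v T2 p" using e2[OF pFI] by simp
          hence "(q, p) \<notin> T2" using qS unfolding DS_def by auto
          thus ?thesis using Ext_facts(5)[OF T2 C ne] x by auto
        qed
      next
        case pnF: False
        hence pS: "p \<in> SC v" using pc by auto
        show ?thesis
        proof (cases "q \<in> FF")
          case qF: True
          have nc': "\<not> ((q, p) \<in> lexsum_rel r0 m0 (mm v) \<or> (p, q) \<in> lexsum_rel r0 m0 (mm v))"
            using nc by blast
          have qFI: "q \<in> FI" using FS_incmp[OF qF pS nc'] .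
          have "p \<in> DS v T1 q" using pS pqT1 unfolding DS_def by auto
          hence "p \<in> DS v T2 q" using e2[OF qFI] by simp
          thus ?thesis unfolding DS_def using x by auto
        next
          case False
          hence "q \<in> SC v" using pc by auto
          thus ?thesis using SC_cmp[OF pS] nc by blast
        qed
      qed
    qed
  qed
qed

lemma phi_inj: "inj_on (phi v) (Ext v)"
  by (intro inj_onI equalityI phi_sub) auto

lemma Ext_upper:
  "card (Ext v) \<le> 2 ^ card (FF \<times> FF) * (1 + (\<Sum>s\<in>S. v s)) ^ (\<Sum>i\<in>II. mfix i)"
proof -
  let ?B = "Pow (FF \<times> FF) \<times> (FI \<rightarrow>\<^sub>E {0..card (SC v)})"
  have finFI: "finite FI" using FI_sub finFF finite_subset by blast
  have img: "phi v ` Ext v \<subseteq> ?B"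
  proof
    fix y assume "y \<in> phi v ` Ext v"
    then obtain T where T: "T \<in> Ext v" "y = phi v T" by auto
    have "DS v T p \<subseteq> SC v" for p unfolding DS_def by auto
    hence "card (DS v T p) \<le> card (SC v)" for p using finSC by (intro card_mono) auto
    thus "y \<in> ?B" unfolding T phi_def by auto
  qed
  have finB: "finite ?B" using finFF finFI by (intro finite_cartesian_product finite_PiE) auto
  have "card (Ext v) \<le> card ?B" by (rule card_inj_on_le[OF phi_inj img finB])
  also have "card ?B = 2 ^ card (FF \<times> FF) * (1 + (\<Sum>s\<in>S. v s)) ^ card FI"
    using finFF finFI by (simp add: card_cartesian_product card_Pow card_PiE card_SC)
  finally show ?thesis by (simp add: card_FI)
qed

end

context lsetup begin

definition DL :: "nat \<Rightarrow> nat set" where "DL x = {s \<in> S. (s, x) \<in> r0}"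
definition low :: "nat \<Rightarrow> nat" where "low x = card (DL x)"

lemma finDL: "finite (DL x)" unfolding DL_def using finS by auto

lemma DL_mono: "(a, b) \<in> r0 \<Longrightarrow> DL a \<subseteq> DL b"
  unfolding DL_def using r0_trans by blast

lemma low_mono: "(a, b) \<in> r0 \<Longrightarrow> low a \<le> low b"
  unfolding low_def using DL_mono finDL by (intro card_mono) auto

lemma DL_self: "s \<in> S \<Longrightarrow> s \<in> DL s"
  unfolding DL_def using S_sub r0_refl by auto

lemma low_strict: "(a, b) \<in> r0 \<Longrightarrow> b \<in> S \<Longrightarrow> a \<noteq> b \<Longrightarrow> low a < low b"
proof -
  assume ab: "(a, b) \<in> r0" "b \<in> S" "a \<noteq> b"
  have "b \<notin> DL a" using ab r0_antisym unfolding DL_def by blast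
  hence "DL a \<subset> DL b" using DL_mono[OF ab(1)] DL_self[OF ab(2)] by blast
  thus ?thesis unfolding low_def using finDL by (intro psubset_card_mono) auto
qed

lemma DL_nested: "DL x \<subseteq> DL y \<or> DL y \<subseteq> DL x"
proof (rule ccontr)
  assume "\<not> ?thesis"
  then obtain a b where a: "a \<in> DL x" "a \<notin> DL y" and b: "b \<in> DL y" "b \<notin> DL x" by blast
  have ab: "a \<in> S" "b \<in> S" using a b unfolding DL_def by auto
  hence "(a, b) \<in> r0 \<or> (b, a) \<in> r0" using S_chain by blast
  thus False using a b r0_trans unfolding DL_def by blast
qed

lemma low_le_DL: "low x \<le> low y \<Longrightarrow> DL x \<subseteq> DL y"
proof (rule ccontr)
  assume le: "low x \<le> low y" and n: "\<not> DL x \<subseteq> DL y"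
  hence "DL y \<subset> DL x" using DL_nested by blast
  hence "low y < low x" unfolding low_def using finDL by (intro psubset_card_mono) auto
  thus False using le by simp
qed

lemma low_inj_S: "a \<in> S \<Longrightarrow> b \<in> S \<Longrightarrow> low a = low b \<Longrightarrow> a = b"
proof (rule ccontr)
  assume ab: "a \<in> S" "b \<in> S" "low a = low b" "a \<noteq> b"
  hence "(a, b) \<in> r0 \<or> (b, a) \<in> r0" using S_chain by blast
  thus False using low_strict ab by fastforce
qed

lemma low_range: "s \<in> S \<Longrightarrow> low s \<in> {1..card S}"
proof -
  assume s: "s \<in> S"
  have "low s \<ge> 1" unfolding low_def using DL_self[OF s] finDL
    by (metis One_nat_def Suc_leI card_gt_0_iff empty_iff)
  moreover have "low s \<le> card S" unfolding low_def DL_def using finS by (intro card_mono) auto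
  ultimately show ?thesis by simp
qed

lemma low_onto: "k \<in> {1..card S} \<Longrightarrow> \<exists>s\<in>S. low s = k"
proof -
  assume k: "k \<in> {1..card S}"
  have inj: "inj_on low S" using low_inj_S by (intro inj_onI) auto
  have sub: "low ` S \<subseteq> {1..card S}" using low_range by auto
  have "card (low ` S) = card {1..card S}" using card_image[OF inj] by simp
  hence "low ` S = {1..card S}" using sub by (intro card_subset_eq) auto
  hence "k \<in> low ` S" using k by simp
  thus ?thesis by auto
qed

lemma II_incmp: "i \<in> II \<Longrightarrow> \<exists>s\<in>S. (i, s) \<notin> r0 \<and> (s, i) \<notin> r0"
  unfolding II_def by auto

lemma not_II_cmp: "i < m0 \<Longrightarrow> i \<notin> II \<Longrightarrow> s \<in> S \<Longrightarrow> (i, s) \<in> r0 \<or> (s, i) \<in> r0"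
  unfolding II_def by auto

lemma II_low_lt: "i \<in> II \<Longrightarrow> s \<in> S \<Longrightarrow> (s, i) \<notin> r0 \<Longrightarrow> low i < low s"
proof -
  assume i: "i \<in> II" and s: "s \<in> S" "(s, i) \<notin> r0"
  show ?thesis
  proof (rule ccontr)
    assume "\<not> low i < low s"
    hence "DL s \<subseteq> DL i" using low_le_DL by simp
    thus False using DL_self[OF s(1)] s unfolding DL_def by blast
  qed
qed

lemma II_block: "i \<in> II \<Longrightarrow> \<exists>s\<in>S. low s = low i + 1"
proof -
  assume i: "i \<in> II"
  obtain s where s: "s \<in> S" "(i, s) \<notin> r0" "(s, i) \<notin> r0" using II_incmp[OF i] by blast
  have "low i < low s" using II_low_lt[OF i s(1) s(3)] .
  moreover have "low s \<le> card S" using low_range[OF s(1)] by simp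
  ultimately show ?thesis using low_onto by simp
qed

lemma II_below_S: "i \<in> II \<Longrightarrow> s \<in> S \<Longrightarrow> (i, s) \<in> r0 \<Longrightarrow> low i + 1 < low s"
proof -
  assume i: "i \<in> II" and s: "s \<in> S" "(i, s) \<in> r0"
  obtain s0 where s0: "s0 \<in> S" "(i, s0) \<notin> r0" "(s0, i) \<notin> r0" using II_incmp[OF i] by blast
  have "(s0, s) \<in> r0" using S_chain s0 s r0_trans by blast
  moreover have "s0 \<noteq> s" using s s0 by auto
  ultimately have lt: "low s0 < low s" using low_strict s by blast
  have lt2: "low i < low s0" using II_low_lt[OF i s0(1) s0(3)] .
  thus ?thesis using lt by simp
qed

lemma II_notII: "i \<in> II \<Longrightarrow> i' < m0 \<Longrightarrow> i' \<notin> II \<Longrightarrow> (i, i') \<in> r0 \<Longrightarrow> low i' = low i \<Longrightarrow> False"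
proof -
  assume i: "i \<in> II" and i': "i' < m0" "i' \<notin> II" "(i, i') \<in> r0" "low i' = low i"
  obtain s0 where s0: "s0 \<in> S" "(i, s0) \<notin> r0" "(s0, i) \<notin> r0" using II_incmp[OF i] by blast
  from not_II_cmp[OF i'(1,2) s0(1)] show False
  proof
    assume "(i', s0) \<in> r0" thus False using i'(3) s0 r0_trans by blast
  next
    assume "(s0, i') \<in> r0"
    hence "s0 \<in> DL i'" using s0 unfolding DL_def by auto
    moreover have "DL i' \<subseteq> DL i" using low_le_DL i' by simp
    ultimately show False using s0 unfolding DL_def by auto
  qed
qed

definition hh :: "nat \<Rightarrow> nat" where "hh i = card {x. x < m0 \<and> (x, i) \<in> r0}"

lemma hh_strict: "(a, b) \<in> r0 \<Longrightarrow> a \<noteq> b \<Longrightarrow> hh a < hh b"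
proof -
  assume ab: "(a, b) \<in> r0" "a \<noteq> b"
  have "b < m0" using ab r0_sub by auto
  have "{x. x < m0 \<and> (x, a) \<in> r0} \<subset> {x. x < m0 \<and> (x, b) \<in> r0}"
    using ab r0_trans r0_antisym \<open>b < m0\<close> r0_refl by blast
  thus ?thesis unfolding hh_def by (intro psubset_card_mono) auto
qed

lemma hh_le: "hh i \<le> m0"
proof -
  have "hh i \<le> card {..<m0}" unfolding hh_def by (intro card_mono) auto
  thus ?thesis by simp
qed

definition Bm :: nat where "Bm = Suc (\<Sum>i<m0. mfix i)"

lemma mfix_Bm: "i < m0 \<Longrightarrow> mfix i < Bm"
proof -
  assume "i < m0"
  hence "mfix i \<le> (\<Sum>i<m0. mfix i)" by (intro member_le_sum) auto
  thus ?thesis unfolding Bm_def by simp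
qed

definition HH :: "nat \<times> nat \<Rightarrow> nat" where "HH p = (hh (fst p) * m0 + fst p) * Bm + snd p"

definition Hb :: nat where "Hb = (m0 + 1) * m0 * Bm"

lemma HH_lt: "i < m0 \<Longrightarrow> j < mfix i \<Longrightarrow> HH (i, j) < Hb"
proof -
  assume ij: "i < m0" "j < mfix i"
  have jB: "j < Bm" using ij mfix_Bm by (meson less_trans)
  have "hh i * m0 + i + 1 \<le> m0 * m0 + m0" using hh_le[of i] ij(1)
    by (metis add_le_mono le_eq_less_or_eq mult_le_mono1 Suc_eq_plus1 Suc_leI add.assoc)
  hence "(hh i * m0 + i + 1) * Bm \<le> (m0 * m0 + m0) * Bm" by (rule mult_right_mono) simp
  moreover have "HH (i, j) < (hh i * m0 + i + 1) * Bm" unfolding HH_def using jB by simp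
  ultimately show ?thesis unfolding Hb_def by (simp add: algebra_simps)
qed

lemma HH_aux: "j < Bm \<Longrightarrow> a < b \<Longrightarrow> a * Bm + j < b * Bm + j'"
proof -
  assume "j < Bm" "a < b"
  hence "a * Bm + j < (a + 1) * Bm" by simp
  also have "\<dots> \<le> b * Bm" using \<open>a < b\<close> by (intro mult_right_mono) auto
  finally show ?thesis by simp
qed

lemma HH_strict_r0: "(i, i') \<in> r0 \<Longrightarrow> i \<noteq> i' \<Longrightarrow> j < Bm \<Longrightarrow> HH (i, j) < HH (i', j')"
proof -
  assume a: "(i, i') \<in> r0" "i \<noteq> i'" "j < Bm"
  have "i < m0" using a r0_sub by auto
  have "hh i < hh i'" using hh_strict a by blast
  have "hh i * m0 + i < (hh i + 1) * m0" using \<open>i < m0\<close> by simp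
  also have "\<dots> \<le> hh i' * m0" using \<open>hh i < hh i'\<close> by (intro mult_right_mono) auto
  finally have "hh i * m0 + i < hh i' * m0 + i'" by simp
  thus ?thesis unfolding HH_def using HH_aux a by simp
qed

lemma HH_inj: "i < m0 \<Longrightarrow> i' < m0 \<Longrightarrow> j < Bm \<Longrightarrow> j' < Bm \<Longrightarrow> HH (i, j) = HH (i', j') \<Longrightarrow> i = i' \<and> j = j'"
proof -
  assume a: "i < m0" "i' < m0" "j < Bm" "j' < Bm" "HH (i, j) = HH (i', j')"
  have e: "(hh i * m0 + i) * Bm + j = (hh i' * m0 + i') * Bm + j'" using a unfolding HH_def by simp
  have "j = ((hh i * m0 + i) * Bm + j) mod Bm" using a by simp
  also have "\<dots> = ((hh i' * m0 + i') * Bm + j') mod Bm" using e by simp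
  also have "\<dots> = j'" using a by simp
  finally have jj: "j = j'" .
  have "hh i * m0 + i = ((hh i * m0 + i) * Bm + j) div Bm" using a by simp
  also have "\<dots> = ((hh i' * m0 + i') * Bm + j') div Bm" using e by simp
  also have "\<dots> = hh i' * m0 + i'" using a by simp
  finally have e2: "hh i * m0 + i = hh i' * m0 + i'" .
  have "i = (hh i * m0 + i) mod m0" using a by simp
  also have "\<dots> = (hh i' * m0 + i') mod m0" using e2 by simp
  also have "\<dots> = i'" using a by simp
  finally show ?thesis using jj by simp
qed

end

lemma enc_aux: "(a::nat) < b \<Longrightarrow> z1 < 2 \<Longrightarrow> a * 2 + z1 < b * 2 + z2" by linarith

lemma enc_lt:
  fixes x1 y1 z1 x2 y2 z2 Bg :: nat
  assumes "y1 < Bg" "z1 < 2"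
    and "x1 < x2 \<or> (x1 = x2 \<and> y1 < y2) \<or> (x1 = x2 \<and> y1 = y2 \<and> z1 < z2)"
  shows "(x1 * Bg + y1) * 2 + z1 < (x2 * Bg + y2) * 2 + z2"
proof -
  consider "x1 < x2" | "x1 = x2 \<and> y1 < y2" | "x1 = x2 \<and> y1 = y2 \<and> z1 < z2" using assms(3) by blast
  thus ?thesis
  proof cases
    case 1
    have "x1 * Bg + y1 < (x1 + 1) * Bg" using assms(1) by simp
    also have "\<dots> \<le> x2 * Bg" using 1 by (intro mult_right_mono) auto
    finally have "x1 * Bg + y1 < x2 * Bg + y2" by linarith
    thus ?thesis using assms(2) by (rule enc_aux)
  next
    case 2 thus ?thesis using assms(2) by (intro enc_aux) auto
  next
    case 3 thus ?thesis by simp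
  qed
qed

lemma par_neq[simp]: "2 * (a::nat) \<noteq> Suc (2 * b)" "Suc (2 * b) \<noteq> 2 * (a::nat)"
  "2 * (a::nat) + 2 \<noteq> Suc (2 * b)" "Suc (2 * b) \<noteq> 2 * (a::nat) + 2"
  "Suc (Suc (2 * (a::nat))) \<noteq> Suc (2 * b)" "Suc (2 * b) \<noteq> Suc (Suc (2 * (a::nat)))"
  by presburger+

lemma slot_lt: "(a::nat) < b \<Longrightarrow> x < u \<Longrightarrow> a * u + x < b * u + y"
proof -
  assume "a < b" "x < u"
  hence "a * u + x < (a + 1) * u" by simp
  also have "\<dots> \<le> b * u" using \<open>a < b\<close> by (intro mult_right_mono) auto
  finally show ?thesis by simp
qed

context lsetup begin

definition c0 :: nat where "c0 = Hb + 2"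
definition vv :: "nat \<Rightarrow> nat \<Rightarrow> nat" where "vv u = (\<lambda>_. c0 * u)"
definition Bg :: "nat \<Rightarrow> nat" where "Bg u = c0 * u + Hb + 1"

definition k1 :: "nat \<times> nat \<Rightarrow> nat" where
  "k1 p = (if fst p \<in> S then 2 * low (fst p) else if fst p \<in> II then 2 * low (fst p) + 2 else 2 * low (fst p) + 1)"
definition k2 :: "nat \<Rightarrow> (nat \<times> nat \<Rightarrow> nat) \<Rightarrow> nat \<times> nat \<Rightarrow> nat" where
  "k2 u c p = (if fst p \<in> S then snd p else if fst p \<in> II then HH p * u + c p else HH p)"
definition k3 :: "nat \<times> nat \<Rightarrow> nat" where
  "k3 p = (if fst p \<in> S then 0 else if fst p \<in> II then 1 else 0)"
definition enc :: "nat \<Rightarrow> (nat \<times> nat \<Rightarrow> nat) \<Rightarrow> nat \<times> nat \<Rightarrow> nat" where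
  "enc u c p = (k1 p * Bg u + k2 u c p) * 2 + k3 p"
definition klt :: "nat \<Rightarrow> (nat \<times> nat \<Rightarrow> nat) \<Rightarrow> nat \<times> nat \<Rightarrow> nat \<times> nat \<Rightarrow> bool" where
  "klt u c p q = (k1 p < k1 q \<or> (k1 p = k1 q \<and> k2 u c p < k2 u c q) \<or>
                  (k1 p = k1 q \<and> k2 u c p = k2 u c q \<and> k3 p < k3 q))"

definition CC :: "nat \<Rightarrow> (nat \<times> nat) set" where "CC u = lexsum_carrier m0 (mm (vv u))"

definition Tc :: "nat \<Rightarrow> (nat \<times> nat \<Rightarrow> nat) \<Rightarrow> (nat \<times> nat) rel" where
  "Tc u c = {(p, q). p \<in> CC u \<and> q \<in> CC u \<and> enc u c p \<le> enc u c q}"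

lemma CC_mem: "(i, j) \<in> CC u \<longleftrightarrow> (i \<in> S \<and> j < c0 * u) \<or> (i < m0 \<and> i \<notin> S \<and> j < mfix i)"
  unfolding CC_def carrier_eq FF_def SC_def vv_def by auto

lemma kS: "i \<in> S \<Longrightarrow> k1 (i, j) = 2 * low i \<and> k2 u c (i, j) = j \<and> k3 (i, j) = 0"
  unfolding k1_def k2_def k3_def by simp
lemma kI: "i \<in> II \<Longrightarrow> k1 (i, j) = 2 * low i + 2 \<and> k2 u c (i, j) = HH (i, j) * u + c (i, j) \<and> k3 (i, j) = 1"
  unfolding k1_def k2_def k3_def using II_notS by simp
lemma kN: "i \<notin> S \<Longrightarrow> i \<notin> II \<Longrightarrow> k1 (i, j) = 2 * low i + 1 \<and> k2 u c (i, j) = HH (i, j) \<and> k3 (i, j) = 0"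
  unfolding k1_def k2_def k3_def by simp

lemma FI_mem: "i \<in> II \<Longrightarrow> j < mfix i \<Longrightarrow> (i, j) \<in> FI"
  unfolding FI_def by simp

lemma II_lt: "i \<in> II \<Longrightarrow> i < m0" unfolding II_def by simp

lemma k_bounds:
  assumes cv: "\<forall>p\<in>FI. c p < u" and p: "p \<in> CC u"
  shows "k2 u c p < Bg u" "k3 p < 2"
proof -
  obtain i j where pij: "p = (i, j)" by (cases p) auto
  show "k3 p < 2" unfolding k3_def by simp
  show "k2 u c p < Bg u"
  proof (cases "i \<in> S")
    case True
    hence "j < c0 * u" using p pij CC_mem by auto
    thus ?thesis using kS[OF True] pij unfolding Bg_def by simp
  next
    case nS: False
    hence ij: "i < m0" "j < mfix i" using p pij CC_mem by auto
    have HHb: "HH (i, j) < Hb" using HH_lt ij by blast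
    show ?thesis
    proof (cases "i \<in> II")
      case True
      have cu: "c (i, j) < u" using cv FI_mem[OF True ij(2)] by blast
      have "HH (i, j) * u + c (i, j) < Hb * u + 0" using slot_lt[OF HHb cu] .
      also have "\<dots> \<le> c0 * u" unfolding c0_def by simp
      finally show ?thesis using kI[OF True] pij unfolding Bg_def by simp
    next
      case False
      thus ?thesis using kN[OF nS False] pij HHb unfolding Bg_def by simp
    qed
  qed
qed

lemma enc_strict:
  assumes cv: "\<forall>p\<in>FI. c p < u" and p: "p \<in> CC u" and k: "klt u c p q"
  shows "enc u c p < enc u c q"
  unfolding enc_def using k_bounds[OF cv p] k unfolding klt_def by (intro enc_lt) auto

lemma key_inj:
  assumes cv: "\<forall>p\<in>FI. c p < u" and p: "p \<in> CC u" and q: "q \<in> CC u"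
    and e: "k1 p = k1 q" "k2 u c p = k2 u c q" "k3 p = k3 q"
  shows "p = q"
proof -
  obtain i j where pij: "p = (i, j)" by (cases p) auto
  obtain i' j' where qij: "q = (i', j')" by (cases q) auto
  have pc: "(i \<in> S \<and> j < c0 * u) \<or> (i < m0 \<and> i \<notin> S \<and> j < mfix i)" using p pij CC_mem by auto
  have qc: "(i' \<in> S \<and> j' < c0 * u) \<or> (i' < m0 \<and> i' \<notin> S \<and> j' < mfix i')" using q qij CC_mem by auto
  have HHinj: "HH (i, j) = HH (i', j') \<Longrightarrow> i < m0 \<Longrightarrow> i' < m0 \<Longrightarrow> j < mfix i \<Longrightarrow> j' < mfix i' \<Longrightarrow> p = q"
    using HH_inj mfix_Bm pij qij by (metis less_trans)
  show ?thesis
  proof (cases "i \<in> S")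
    case iS: True
    show ?thesis
    proof (cases "i' \<in> S")
      case True
      have "low i = low i'" "j = j'" using e kS[OF iS] kS[OF True] pij qij by auto
      thus ?thesis using low_inj_S iS True pij qij by auto
    next
      case False
      thus ?thesis using e kS[OF iS] kI[of i'] kN[OF False] pij qij by (cases "i' \<in> II") auto
    qed
  next
    case inS: False
    show ?thesis
    proof (cases "i \<in> II")
      case iI: True
      have cu: "c (i, j) < u" using cv FI_mem[OF iI] pc inS by auto
      show ?thesis
      proof (cases "i' \<in> II")
        case i'I: True
        have cu': "c (i', j') < u" using cv FI_mem[OF i'I] qc II_notS[OF i'I] by auto
        have eq: "HH (i, j) * u + c (i, j) = HH (i', j') * u + c (i', j')"
          using e kI[OF iI] kI[OF i'I] pij qij by auto
        have "HH (i, j) = HH (i', j')"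
        proof (rule ccontr)
          assume "HH (i, j) \<noteq> HH (i', j')"
          hence "HH (i, j) < HH (i', j') \<or> HH (i', j') < HH (i, j)" by auto
          thus False using slot_lt[OF _ cu, of "HH (i, j)" "HH (i', j')" "c (i', j')"]
              slot_lt[OF _ cu', of "HH (i', j')" "HH (i, j)" "c (i, j)"] eq by auto
        qed
        thus ?thesis using HHinj pc qc inS II_notS[OF i'I] by auto
      next
        case False
        thus ?thesis using e kI[OF iI] kS[of i'] kN[of i'] pij qij by (cases "i' \<in> S") auto
      qed
    next
      case iN: False
      show ?thesis
      proof (cases "i' \<in> S")
        case True thus ?thesis using e kN[OF inS iN] kS[OF True] pij qij by auto
      next
        case i'nS: False
        show ?thesis
        proof (cases "i' \<in> II")
          case True thus ?thesis using e kN[OF inS iN] kI[OF True] pij qij by auto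
        next
          case False
          have "HH (i, j) = HH (i', j')" using e kN[OF inS iN] kN[OF i'nS False] pij qij by auto
          thus ?thesis using HHinj pc qc inS i'nS by auto
        qed
      qed
    qed
  qed
qed

lemma enc_inj:
  assumes cv: "\<forall>p\<in>FI. c p < u" and p: "p \<in> CC u" and q: "q \<in> CC u" and e: "enc u c p = enc u c q"
  shows "p = q"
proof (rule ccontr)
  assume ne: "p \<noteq> q"
  have "\<not> (k1 p = k1 q \<and> k2 u c p = k2 u c q \<and> k3 p = k3 q)" using key_inj[OF cv p q] ne by blast
  hence "klt u c p q \<or> klt u c q p" unfolding klt_def by auto
  thus False using enc_strict[OF cv p] enc_strict[OF cv q] e by fastforce
qed

end

context lsetup begin

lemma rel_klt:
  assumes cv: "\<forall>p\<in>FI. c p < u" and r: "(p, q) \<in> lexsum_rel r0 m0 (mm (vv u))"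
  shows "p = q \<or> klt u c p q"
proof -
  obtain i j where pij: "p = (i, j)" by (cases p) auto
  obtain i' j' where qij: "q = (i', j')" by (cases q) auto
  have pC: "p \<in> CC u" and qC: "q \<in> CC u" using r unfolding lexsum_rel_def CC_def by auto
  have pc: "(i \<in> S \<and> j < c0 * u) \<or> (i < m0 \<and> i \<notin> S \<and> j < mfix i)" using pC pij CC_mem by auto
  have qc: "(i' \<in> S \<and> j' < c0 * u) \<or> (i' < m0 \<and> i' \<notin> S \<and> j' < mfix i')" using qC qij CC_mem by auto
  have rr: "(i \<noteq> i' \<and> (i, i') \<in> r0) \<or> (i = i' \<and> j \<le> j')"
    using r pij qij unfolding lexsum_rel_def by auto
  show ?thesis
  proof (cases "i = i'")
    case True
    hence ii: "i' = i" "j \<le> j'" using rr by auto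
    show ?thesis
    proof (cases "j = j'")
      case True thus ?thesis using pij qij ii by simp
    next
      case False
      hence jj: "j < j'" using ii by simp
      have HHlt: "HH (i, j) < HH (i, j')" unfolding HH_def using jj by simp
      show ?thesis
      proof (cases "i \<in> S")
        case True thus ?thesis using kS[OF True] pij qij ii jj unfolding klt_def by auto
      next
        case nS: False
        show ?thesis
        proof (cases "i \<in> II")
          case True
          have cu: "c (i, j) < u" using cv FI_mem[OF True] pc nS by auto
          show ?thesis using kI[OF True] pij qij ii slot_lt[OF HHlt cu] unfolding klt_def by auto
        next
          case False
          thus ?thesis using kN[OF nS False] pij qij ii HHlt unfolding klt_def by auto
        qed
      qed
    qed
  next
    case ne: False
    hence r0ii: "(i, i') \<in> r0" using rr by auto
    have lowle: "low i \<le> low i'" using low_mono[OF r0ii] .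
    have j_Bm: "i \<notin> S \<Longrightarrow> j < Bm" using pc mfix_Bm less_trans by blast
    have HHlt: "i \<notin> S \<Longrightarrow> HH (i, j) < HH (i', j')" using HH_strict_r0[OF r0ii ne] j_Bm by blast
    show ?thesis
    proof (cases "i \<in> S")
      case iS: True
      show ?thesis
      proof (cases "i' \<in> S")
        case True
        have "low i < low i'" using low_strict[OF r0ii True ne] .
        thus ?thesis using kS[OF iS] kS[OF True] pij qij unfolding klt_def by auto
      next
        case i'nS: False
        show ?thesis
        proof (cases "i' \<in> II")
          case True thus ?thesis using kS[OF iS] kI[OF True] pij qij lowle unfolding klt_def by auto
        next
          case False thus ?thesis using kS[OF iS] kN[OF i'nS False] pij qij lowle unfolding klt_def by auto
        qed
      qed
    next
      case inS: False
      show ?thesis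
      proof (cases "i \<in> II")
        case iI: True
        have cu: "c (i, j) < u" using cv FI_mem[OF iI] pc inS by auto
        show ?thesis
        proof (cases "i' \<in> S")
          case True
          have "low i + 1 < low i'" using II_below_S[OF iI True r0ii] .
          thus ?thesis using kI[OF iI] kS[OF True] pij qij unfolding klt_def by auto
        next
          case i'nS: False
          show ?thesis
          proof (cases "i' \<in> II")
            case True
            show ?thesis
            proof (cases "low i = low i'")
              case True
              thus ?thesis using kI[OF iI] kI[OF \<open>i' \<in> II\<close>] pij qij slot_lt[OF HHlt[OF inS] cu] unfolding klt_def by auto
            next
              case False
              thus ?thesis using kI[OF iI] kI[OF \<open>i' \<in> II\<close>] pij qij lowle unfolding klt_def by auto
            qed
          next
            case i'N: False
            have i'm: "i' < m0" using qc i'nS by auto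
            have "low i' \<noteq> low i" using II_notII[OF iI i'm i'N r0ii] by blast
            hence "low i < low i'" using lowle by simp
            thus ?thesis using kI[OF iI] kN[OF i'nS i'N] pij qij unfolding klt_def by auto
          qed
        qed
      next
        case iN: False
        show ?thesis
        proof (cases "i' \<in> S")
          case True
          have "low i < low i'" using low_strict[OF r0ii True ne] .
          thus ?thesis using kN[OF inS iN] kS[OF True] pij qij unfolding klt_def by auto
        next
          case i'nS: False
          show ?thesis
          proof (cases "i' \<in> II")
            case True thus ?thesis using kN[OF inS iN] kI[OF True] pij qij lowle unfolding klt_def by auto
          next
            case False
            thus ?thesis using kN[OF inS iN] kN[OF i'nS False] pij qij lowle HHlt[OF inS]
              unfolding klt_def by (cases "low i = low i'") auto
          qed
        qed
      qed
    qed
  qed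
qed

lemma Tc_Ext:
  assumes cv: "\<forall>p\<in>FI. c p < u"
  shows "Tc u c \<in> Ext (vv u)"
proof -
  have C: "lexsum_carrier m0 (mm (vv u)) = CC u" unfolding CC_def by simp
  have lin: "linear_order_on (CC u) (Tc u c)"
    unfolding linear_order_on_def partial_order_on_def preorder_on_def refl_on_def trans_def
      antisym_def total_on_def Tc_def
    using enc_inj[OF cv] by (auto intro: le_trans)
  have sub: "lexsum_rel r0 m0 (mm (vv u)) \<subseteq> Tc u c"
  proof
    fix x assume x: "x \<in> lexsum_rel r0 m0 (mm (vv u))"
    obtain p q where pq: "x = (p, q)" by (cases x) auto
    have pC: "p \<in> CC u" and qC: "q \<in> CC u" using x pq unfolding lexsum_rel_def CC_def by auto
    have "p = q \<or> klt u c p q" using rel_klt[OF cv] x pq by blast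
    hence "enc u c p \<le> enc u c q" using enc_strict[OF cv pC] by fastforce
    thus "x \<in> Tc u c" unfolding Tc_def using pq pC qC by auto
  qed
  show ?thesis unfolding Ext_def using lin sub C by simp
qed

lemma Tc_distinct:
  assumes c: "c \<in> FI \<rightarrow>\<^sub>E {..<u}" and c': "c' \<in> FI \<rightarrow>\<^sub>E {..<u}" and ne: "c \<noteq> c'"
  shows "Tc u c \<noteq> Tc u c'"
proof -
  have cv: "\<forall>p\<in>FI. c p < u" and cv': "\<forall>p\<in>FI. c' p < u" using c c' by auto
  obtain p where pF: "p \<in> FI" and pne: "c p \<noteq> c' p"
    using ne c c' by (metis PiE_ext)
  have sym: "Tc u a \<noteq> Tc u b" if a: "\<forall>p\<in>FI. a p < u" and b: "\<forall>p\<in>FI. b p < u" and lt: "a p < b p" for a b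
  proof -
    obtain i j where pij: "p = (i, j)" and iI: "i \<in> II" and jm: "j < mfix i" using pF unfolding FI_def by auto
    have inS: "i \<notin> S" using II_notS[OF iI] .
    have im: "i < m0" using II_lt[OF iI] .
    obtain s where s: "s \<in> S" "low s = low i + 1" using II_block[OF iI] by blast
    define y where "y = HH p * u + a p + 1"
    have au: "a p < u" using a pF by blast
    have HHb: "HH p < Hb" using HH_lt im jm pij by simp
    have "HH p * u + a p < Hb * u + 0" using slot_lt[OF HHb au] .
    moreover have "c0 * u = Hb * u + 2 * u" unfolding c0_def by (simp add: algebra_simps)
    ultimately have ylt: "y < c0 * u" unfolding y_def using au by linarith
    define q where "q = (s, y)"
    have qC: "q \<in> CC u" unfolding q_def using CC_mem s ylt by simp
    have pC: "p \<in> CC u" using CC_mem pij im inS jm by simp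
    have kq: "k1 q = 2 * low i + 2" "k2 u a q = y" "k2 u b q = y" "k3 q = 0"
      using kS[OF s(1)] s(2) unfolding q_def by auto
    have kp: "k1 p = 2 * low i + 2" "k2 u a p = HH p * u + a p" "k2 u b p = HH p * u + b p" "k3 p = 1"
      using kI[OF iI] pij by auto
    have "klt u a p q" using kq kp unfolding klt_def y_def by simp
    hence "enc u a p < enc u a q" using enc_strict[OF a pC] by blast
    hence n1: "(q, p) \<notin> Tc u a" unfolding Tc_def by auto
    have "klt u b q p" using kq kp lt unfolding klt_def y_def by auto
    hence "enc u b q < enc u b p" using enc_strict[OF b qC] by blast
    hence "(q, p) \<in> Tc u b" unfolding Tc_def using pC qC by auto
    thus ?thesis using n1 by auto
  qed
  show ?thesis
  proof (cases "c p < c' p")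
    case True thus ?thesis using sym[OF cv cv'] by blast
  next
    case False
    hence "c' p < c p" using pne by simp
    thus ?thesis using sym[OF cv' cv] by metis
  qed
qed

lemma Ext_lower: "u ^ (\<Sum>i\<in>II. mfix i) \<le> card (Ext (vv u))"
proof -
  have finFI: "finite FI" using FI_sub finFF finite_subset by blast
  have "u ^ (\<Sum>i\<in>II. mfix i) = card (FI \<rightarrow>\<^sub>E {..<u})"
    using finFI by (simp add: card_PiE card_FI)
  also have "\<dots> \<le> card (Ext (vv u))"
  proof (rule card_inj_on_le)
    show "inj_on (Tc u) (FI \<rightarrow>\<^sub>E {..<u})" using Tc_distinct by (meson inj_onI)
    show "Tc u ` (FI \<rightarrow>\<^sub>E {..<u}) \<subseteq> Ext (vv u)" using Tc_Ext by auto
    have "Ext (vv u) \<subseteq> Pow (lexsum_carrier m0 (mm (vv u)) \<times> lexsum_carrier m0 (mm (vv u)))"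
      using Ext_facts(1) by blast
    moreover have "finite (Pow (lexsum_carrier m0 (mm (vv u)) \<times> lexsum_carrier m0 (mm (vv u))))"
      using finC by simp
    ultimately show "finite (Ext (vv u))" by (rule finite_subset)
  qed
  finally show ?thesis .
qed

end

theorem corollary5p5:
  fixes r0 :: "(nat \<times> nat) set" and m0 :: nat and S :: "nat set"
    and mfix :: "nat \<Rightarrow> nat" and f :: "(nat \<Rightarrow>\<^sub>0 nat) \<Rightarrow>\<^sub>0 rat"
  assumes poset: "partial_order_on {..<m0} r0"
    and S_sub: "S \<subseteq> {..<m0}"
    and S_chain: "\<forall>a\<in>S. \<forall>b\<in>S. (a, b) \<in> r0 \<or> (b, a) \<in> r0"
    and f_vars: "\<forall>\<alpha>\<in>Poly_Mapping.keys f. Poly_Mapping.keys \<alpha> \<subseteq> S"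
    and f_eval: "\<forall>v :: nat \<Rightarrow> nat.
       of_nat (L_plus r0 m0 (\<lambda>i. if i \<in> S then v i else mfix i)) = mpoly_eval f (\<lambda>i. of_nat (v i))"
  shows "total_degree f =
    (\<Sum>i\<in>{i. i < m0 \<and> (\<exists>s\<in>S. (i, s) \<notin> r0 \<and> (s, i) \<notin> r0)}. mfix i)"
proof -
  interpret lsetup r0 m0 S mfix using poset S_sub S_chain by unfold_locales
  have setI: "{i. i < m0 \<and> (\<exists>s\<in>S. (i, s) \<notin> r0 \<and> (s, i) \<notin> r0)} = II" unfolding II_def by simp
  define D where "D = (\<Sum>i\<in>II. mfix i)"
  have Lv: "L_plus r0 m0 (\<lambda>i. if i \<in> S then v i else mfix i) = card (Ext v)" for v
    using L_plus_Ext[of v] unfolding mm_def by simp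
  have up: "total_degree f \<le> D"
  proof (rule degree_upper[OF S_sub f_vars])
    show "0 \<le> (of_nat (2 ^ card (FF \<times> FF)) :: rat)" by simp
    show "\<forall>v::nat\<Rightarrow>nat. 0 \<le> mpoly_eval f (\<lambda>i. of_nat (v i))" using f_eval by (metis of_nat_0_le_iff)
    show "\<forall>v::nat\<Rightarrow>nat. mpoly_eval f (\<lambda>i. of_nat (v i)) \<le> of_nat (2 ^ card (FF \<times> FF)) * (1 + of_nat (\<Sum>s\<in>S. v s)) ^ D"
    proof
      fix v :: "nat \<Rightarrow> nat"
      have "mpoly_eval f (\<lambda>i. of_nat (v i)) = of_nat (card (Ext v))" using f_eval Lv by metis
      also have "\<dots> \<le> (of_nat (2 ^ card (FF \<times> FF) * (1 + (\<Sum>s\<in>S. v s)) ^ D) :: rat)"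
        using Ext_upper[of v] unfolding D_def by (simp only: of_nat_le_iff)
      also have "\<dots> = of_nat (2 ^ card (FF \<times> FF)) * (1 + of_nat (\<Sum>s\<in>S. v s)) ^ D" by simp
      finally show "mpoly_eval f (\<lambda>i. of_nat (v i)) \<le> of_nat (2 ^ card (FF \<times> FF)) * (1 + of_nat (\<Sum>s\<in>S. v s)) ^ D" .
    qed
  qed
  have lo: "D \<le> total_degree f"
  proof (rule degree_lower[OF finS f_vars, where cc = c0])
    show "\<forall>u::nat. of_nat (u ^ D) \<le> mpoly_eval f (\<lambda>i. of_nat (c0 * u))"
    proof
      fix u :: nat
      have "(of_nat (u ^ D) :: rat) \<le> of_nat (card (Ext (vv u)))"
        using Ext_lower[of u] unfolding D_def by (simp only: of_nat_le_iff)
      also have "\<dots> = mpoly_eval f (\<lambda>i. of_nat (vv u i))" using f_eval Lv by metis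
      also have "\<dots> = mpoly_eval f (\<lambda>i. of_nat (c0 * u))" unfolding vv_def by simp
      finally show "(of_nat (u ^ D) :: rat) \<le> mpoly_eval f (\<lambda>i. of_nat (c0 * u))" .
    qed
  qed
  show ?thesis using up lo unfolding setI D_def by simp
qed

end
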